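(* Every real matrix that satisfies the dominance condition has full row rank, and each of its columns contains exactly one entry equal to $1$.
   Context: A matrix $C_1$ covers $C_2$ if $C_1-C_2$ is entrywise nonnegative. A matrix is columnwise normal if its entries lie in $[0,1]$ and every column has at least one entry equal to $1$. A columnwise normal matrix with $n$ rows satisfies the dominance condition if (a) there is an $n\times n$ submatrix (formed by $n$ of its columns) covering a permutation matrix, and (b) for every $n\times n$ such submatrix covering a permutation matrix, the sum of each row is less than $2$. *)

theory Defs
  imports "HOL-Analysis.Analysis"
begin

text \<open>Matrices are A :: real^'c^'r : rows indexed by 'r, columns by 'c; entry A$i$j.\<close>

definition covers :: "real^'c^'r \<Rightarrow> real^'c^'r \<Rightarrow> bool" where
  "covers C1 C2 \<longleftrightarrow> (\<forall>i j. C1$i$j - C2$i$j \<ge> 0)"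

definition perm_matrix :: "('n \<Rightarrow> 'n) \<Rightarrow> real^'n^'n" where
  "perm_matrix p = (\<chi> i j. if p i = j then 1 else 0)"

definition is_permutation_matrix :: "real^'n^'n \<Rightarrow> bool" where
  "is_permutation_matrix P \<longleftrightarrow> (\<exists>p. p permutes (UNIV::'n set) \<and> P = perm_matrix p)"

definition columnwise_normal :: "real^'c^'r \<Rightarrow> bool" where
  "columnwise_normal A \<longleftrightarrow>
     (\<forall>i j. 0 \<le> A$i$j \<and> A$i$j \<le> 1) \<and> (\<forall>j. \<exists>i. A$i$j = 1)"

definition col_submatrix :: "real^'c^'r \<Rightarrow> ('r \<Rightarrow> 'c) \<Rightarrow> real^'r^'r" where
  "col_submatrix A f = (\<chi> i j. A$i$(f j))"

definition dominance_condition :: "real^'c^'r \<Rightarrow> bool" where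
  "dominance_condition A \<longleftrightarrow>
     columnwise_normal A \<and>
     (\<exists>f. inj f \<and> (\<exists>P. is_permutation_matrix P \<and> covers (col_submatrix A f) P)) \<and>
     (\<forall>f. inj f \<and> (\<exists>P. is_permutation_matrix P \<and> covers (col_submatrix A f) P) \<longrightarrow>
          (\<forall>i. (\<Sum>j\<in>UNIV. col_submatrix A f $ i $ j) < 2))"

end

theory Submission
  imports Defs
begin

lemma get_g:
  fixes A :: "real^'c^'r"
  assumes "dominance_condition A"
  shows "\<exists>g. inj g \<and> (\<forall>i. A$i$(g i) = 1)"
proof -
  from assms obtain f P where f: "inj f" and P: "is_permutation_matrix P"
    and cv: "covers (col_submatrix A f) P" and cn: "columnwise_normal A"
    unfolding dominance_condition_def by blast
  from P obtain p where p: "p permutes (UNIV::'r set)" and Pp: "P = perm_matrix p"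
    unfolding is_permutation_matrix_def by blast
  have "A$i$(f (p i)) = 1" for i
  proof -
    have "A$i$(f (p i)) - 1 \<ge> 0"
      using cv unfolding covers_def Pp perm_matrix_def col_submatrix_def
      by (metis (mono_tags, lifting) vec_lambda_beta)
    moreover have "A$i$(f (p i)) \<le> 1" using cn unfolding columnwise_normal_def by blast
    ultimately show ?thesis by linarith
  qed
  moreover have "inj (f \<circ> p)"
    using f p by (meson inj_compose permutes_inj)
  ultimately show ?thesis by (intro exI[of _ "f \<circ> p"]) auto
qed

lemma rowsum:
  fixes A :: "real^'c^'r"
  assumes "dominance_condition A" "inj g" "\<forall>i. A$i$(g i) = 1"
  shows "(\<Sum>j\<in>UNIV. A$i$(g j)) < 2"
proof -
  have "covers (col_submatrix A g) (perm_matrix id)"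
    using assms(3) unfolding covers_def col_submatrix_def perm_matrix_def
    using assms(1) unfolding dominance_condition_def columnwise_normal_def by auto
  moreover have "is_permutation_matrix (perm_matrix (id::'r\<Rightarrow>'r))"
    unfolding is_permutation_matrix_def using permutes_id by blast
  ultimately have "(\<Sum>j\<in>UNIV. col_submatrix A g $ i $ j) < 2"
    using assms(1,2) unfolding dominance_condition_def by blast
  then show ?thesis unfolding col_submatrix_def by simp
qed

lemma ge_two:
  fixes A :: "real^'c^'r"
  assumes "columnwise_normal A" "k \<noteq> i" "A$i$(g i) = 1" "A$i$(g k) = 1"
  shows "(\<Sum>j\<in>UNIV. A$i$(g j)) \<ge> 2"
proof -
  have "(\<Sum>j\<in>{i,k}. A$i$(g j)) \<le> (\<Sum>j\<in>UNIV. A$i$(g j))"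
    by (rule sum_mono2) (use assms(1) in \<open>auto simp: columnwise_normal_def\<close>)
  moreover have "(\<Sum>j\<in>{i,k}. A$i$(g j)) = 2" using assms(2-4) by simp
  ultimately show ?thesis by simp
qed

theorem lemma4p6:
  fixes A :: "real^'c^'r"
  assumes "dominance_condition A"
  shows "rank A = CARD('r) \<and> (\<forall>j. \<exists>!i. A$i$j = 1)"
proof
  have cn: "columnwise_normal A" using assms unfolding dominance_condition_def by blast
  obtain g where g: "inj g" and g1: "\<forall>i. A$i$(g i) = 1" using get_g[OF assms] by blast
  show "\<forall>j. \<exists>!i. A$i$j = 1"
  proof
    fix c
    show "\<exists>!i. A$i$c = 1"
    proof (rule ex_ex1I)
      show "\<exists>i. A$i$c = 1" using cn unfolding columnwise_normal_def by blast
    next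
      fix i1 i2 assume a1: "A$i1$c = 1" and a2: "A$i2$c = 1"
      show "i1 = i2"
      proof (rule ccontr)
        assume ne: "i1 \<noteq> i2"
        obtain h k where h: "inj h" and h1: "\<forall>i. A$i$(h i) = 1" and hk: "h k = c"
        proof (cases "c \<in> range g")
          case True
          then obtain k where "g k = c" by auto
          then show ?thesis using that g g1 by blast
        next
          case False
          have "inj (g(i1 := c))" using g False unfolding inj_on_def by auto
          moreover have "\<forall>i. A$i$((g(i1 := c)) i) = 1" using g1 a1 by auto
          ultimately show ?thesis using that[of "g(i1:=c)" i1] by simp
        qed
        obtain i' where i': "i' \<noteq> k" "A$i'$c = 1" using ne a1 a2 by metis
        have "(\<Sum>j\<in>UNIV. A$i'$(h j)) \<ge> 2"
          using h1 hk i'(2) by (intro ge_two[OF cn not_sym[OF i'(1)], where g=h]) simp_all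
        moreover have "(\<Sum>j\<in>UNIV. A$i'$(h j)) < 2" using rowsum[OF assms h h1] by blast
        ultimately show False by simp
      qed
    qed
  qed
  define B where "B = col_submatrix A g"
  have Bij: "B$i$j = A$i$(g j)" for i j unfolding B_def col_submatrix_def by simp
  have ker: "z = 0" if z: "B *v z = 0" for z
  proof -
    obtain i where i: "\<bar>z$i\<bar> = Max (range (\<lambda>j. \<bar>z$j\<bar>))"
    proof -
      have "Max (range (\<lambda>j. \<bar>z$j\<bar>)) \<in> range (\<lambda>j. \<bar>z$j\<bar>)"
        by (rule Max_in) auto
      then show ?thesis using that by (metis imageE)
    qed
    have mx: "\<bar>z$j\<bar> \<le> \<bar>z$i\<bar>" for j unfolding i by (rule Max_ge) auto
    have "0 = (B *v z)$i" using z by simp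
    also have "\<dots> = (\<Sum>j\<in>UNIV. A$i$(g j) * z$j)"
      by (simp add: matrix_vector_mult_def Bij)
    also have "\<dots> = z$i + (\<Sum>j\<in>UNIV-{i}. A$i$(g j) * z$j)"
      by (simp add: sum.remove[of UNIV i] g1)
    finally have e: "z$i = - (\<Sum>j\<in>UNIV-{i}. A$i$(g j) * z$j)" by linarith
    have "\<bar>z$i\<bar> \<le> (\<Sum>j\<in>UNIV-{i}. \<bar>A$i$(g j) * z$j\<bar>)"
      unfolding e abs_minus_cancel by (rule sum_abs)
    also have "\<dots> \<le> (\<Sum>j\<in>UNIV-{i}. A$i$(g j) * \<bar>z$i\<bar>)"
    proof (rule sum_mono)
      fix j
      have "0 \<le> A$i$(g j)" using cn unfolding columnwise_normal_def by blast
      then show "\<bar>A$i$(g j) * z$j\<bar> \<le> A$i$(g j) * \<bar>z$i\<bar>"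
        by (simp add: abs_mult mult_left_mono mx)
    qed
    also have "\<dots> = (\<Sum>j\<in>UNIV-{i}. A$i$(g j)) * \<bar>z$i\<bar>"
      by (simp add: sum_distrib_right)
    finally have le: "\<bar>z$i\<bar> \<le> (\<Sum>j\<in>UNIV-{i}. A$i$(g j)) * \<bar>z$i\<bar>" .
    have "(\<Sum>j\<in>UNIV. A$i$(g j)) = 1 + (\<Sum>j\<in>UNIV-{i}. A$i$(g j))"
      by (simp add: sum.remove[of UNIV i] g1)
    with rowsum[OF assms g g1, of i] have "(\<Sum>j\<in>UNIV-{i}. A$i$(g j)) < 1" by linarith
    then have s1: "(\<Sum>j\<in>UNIV-{i}. A$i$(g j)) * \<bar>z$i\<bar> < 1 * \<bar>z$i\<bar>" if "\<bar>z$i\<bar> > 0"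
      using that by (intro mult_strict_right_mono) auto
    have "\<bar>z$i\<bar> = 0"
    proof (rule ccontr)
      assume "\<bar>z$i\<bar> \<noteq> 0"
      then have "\<bar>z$i\<bar> > 0" by simp
      with s1 le show False by linarith
    qed
    with mx have "\<forall>j. z$j = 0" by (metis abs_le_zero_iff)
    then show ?thesis by (simp add: vec_eq_iff)
  qed
  have "inj ((*v) B)"
  proof (rule injI)
    fix x y assume "B *v x = B *v y"
    then have "B *v (x - y) = 0" by (simp add: matrix_vector_mult_diff_distrib)
    then show "x = y" using ker by fastforce
  qed
  then have sB: "surj ((*v) B)"
    using full_rank_injective full_rank_surjective by metis
  have "surj ((*v) A)"
  proof -
    have "y \<in> range ((*v) A)" for y
    proof -
      obtain z where yz: "y = B *v z" using sB by (metis surjD)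
      define x where "x = (\<chi> c. if c \<in> range g then z $ (inv g c) else 0)"
      have "(A *v x)$i = y$i" for i
      proof -
        have "(A *v x)$i = (\<Sum>c\<in>UNIV. A$i$c * x$c)" by (simp add: matrix_vector_mult_def)
        also have "\<dots> = (\<Sum>c\<in>range g. A$i$c * x$c)"
          by (rule sum.mono_neutral_right) (auto simp: x_def)
        also have "\<dots> = (\<Sum>j\<in>UNIV. A$i$(g j) * x$(g j))"
          using sum.reindex[OF g, of "\<lambda>c. A$i$c * x$c"] by simp
        also have "\<dots> = (\<Sum>j\<in>UNIV. A$i$(g j) * z$j)"
          by (simp add: x_def inv_f_f[OF g])
        also have "\<dots> = y$i" by (simp add: yz matrix_vector_mult_def Bij)
        finally show ?thesis .
      qed
      then have "y = A *v x" by (simp add: vec_eq_iff)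
      then show ?thesis by blast
    qed
    then show ?thesis by blast
  qed
  then show "rank A = CARD('r)" using full_rank_surjective by blast
qed

end
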